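(* Let $r,s,t,u,v$ be non-negative integers with $u+v=4t-r-s+3$. Let $G=(r,s,t,t,t,u)$ and $H=(r,s,t,t,t,v)$, with interesting factors $g(x)$ and $h(x)$ respectively. Then $$g(x)=-h(-x+6t+4).$$
   Context: All graphs are finite and simple. For integers $1\le j\le k$, a $(j,k)$-biclique is a graph whose vertex set is the disjoint union of a $j$-clique and a $k$-clique, with an arbitrary set of additional edges each joining a vertex of the $j$-clique to a vertex of the $k$-clique. For non-negative integers $a,b,c,d,e,f$, the notation $(a,b,c,d,e,f)$ denotes the $(3,k)$-biclique with $k=a+b+c+d+e+f$, whose $3$-clique is $\{v_1,v_2,v_3\}$, in which every vertex of the $k$-clique is adjacent to exactly one or exactly two of $v_1,v_2,v_3$, and exactly $a$ (resp. $b$, $c$) vertices of the $k$-clique are adjacent to $v_1$ only (resp. $v_2$ only, $v_3$ only), and exactly $d$ (resp. $e$, $f$) vertices of the $k$-clique are adjacent to exactly $v_2$ and $v_3$ (resp. exactly $v_1$ and $v_3$, exactly $v_1$ and $v_2$). This determines the graph up to isomorphism. The interesting factor of a $(3,k)$-biclique $G$ is the cubic polynomial $P_G(x)/(x)_k$, where $P_G$ is the chromatic polynomial and $(x)_k=x(x-1)\cdots(x-k+1)$. *)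

theory Defs
  imports "HOL-Computational_Algebra.Polynomial" "HOL-Library.FuncSet"
begin

definition num_colorings :: "'a set \<Rightarrow> ('a \<Rightarrow> 'a \<Rightarrow> bool) \<Rightarrow> nat \<Rightarrow> nat" where
  "num_colorings V E n =
     card {c \<in> V \<rightarrow>\<^sub>E {0..<n}. \<forall>i\<in>V. \<forall>j\<in>V. E i j \<longrightarrow> c i \<noteq> c j}"

definition chromatic_poly :: "'a set \<Rightarrow> ('a \<Rightarrow> 'a \<Rightarrow> bool) \<Rightarrow> real poly" where
  "chromatic_poly V E = (THE p. \<forall>n::nat. poly p (real n) = real (num_colorings V E n))"

definition falling_poly :: "nat \<Rightarrow> real poly" where
  "falling_poly k = (\<Prod>i<k. [:- real i, 1:])"

(* The (3,k)-biclique (a,b,c,d,e,f): vertices 0,1,2 are v1,v2,v3; vertices 3..k+2 form the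
   k-clique, k = a+b+c+d+e+f. *)
definition bic_nbrs :: "nat \<Rightarrow> nat \<Rightarrow> nat \<Rightarrow> nat \<Rightarrow> nat \<Rightarrow> nat \<Rightarrow> nat set" where
  "bic_nbrs a b c d e m =
     (if m < a then {0}
      else if m < a+b then {1}
      else if m < a+b+c then {2}
      else if m < a+b+c+d then {1,2}
      else if m < a+b+c+d+e then {0,2}
      else {0,1})"

definition bic_verts :: "nat \<Rightarrow> nat \<Rightarrow> nat \<Rightarrow> nat \<Rightarrow> nat \<Rightarrow> nat \<Rightarrow> nat set" where
  "bic_verts a b c d e f = {0..<a+b+c+d+e+f+3}"

definition bic_adj :: "nat \<Rightarrow> nat \<Rightarrow> nat \<Rightarrow> nat \<Rightarrow> nat \<Rightarrow> nat \<Rightarrow> nat \<Rightarrow> nat \<Rightarrow> bool" where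
  "bic_adj a b c d e f i j =
     (i \<noteq> j \<and>
      ((i < 3 \<and> j < 3) \<or> (3 \<le> i \<and> 3 \<le> j) \<or>
       (i < 3 \<and> 3 \<le> j \<and> i \<in> bic_nbrs a b c d e (j - 3)) \<or>
       (j < 3 \<and> 3 \<le> i \<and> j \<in> bic_nbrs a b c d e (i - 3))))"

definition interesting_factor :: "nat \<Rightarrow> nat \<Rightarrow> nat \<Rightarrow> nat \<Rightarrow> nat \<Rightarrow> nat \<Rightarrow> real poly" where
  "interesting_factor a b c d e f =
     chromatic_poly (bic_verts a b c d e f) (bic_adj a b c d e f) div falling_poly (a+b+c+d+e+f)"

end

theory Submission
  imports Defs
begin

lemma pair_card:
  assumes "finite B" "finite C"
  shows "int (card {(y,z). y \<in> B \<and> z \<in> C \<and> y \<noteq> z}) = int (card B) * int (card C) - int (card (B \<inter> C))"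
proof -
  have eq: "B \<times> C = {(y,z). y \<in> B \<and> z \<in> C \<and> y \<noteq> z} \<union> (\<lambda>y. (y,y)) ` (B \<inter> C)" by auto
  have d: "{(y,z). y \<in> B \<and> z \<in> C \<and> y \<noteq> z} \<inter> (\<lambda>y. (y,y)) ` (B \<inter> C) = {}" by auto
  have f1: "finite {(y,z). y \<in> B \<and> z \<in> C \<and> y \<noteq> z}"
    by (rule finite_subset[of _ "B \<times> C"]) (use assms in auto)
  have "card (B \<times> C) = card {(y,z). y \<in> B \<and> z \<in> C \<and> y \<noteq> z} + card ((\<lambda>y. (y,y)) ` (B \<inter> C))"
    unfolding eq by (rule card_Un_disjoint[OF f1 _ d]) (use assms in auto)
  moreover have "card ((\<lambda>y. (y,y)) ` (B \<inter> C)) = card (B \<inter> C)"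
    by (rule card_image) (auto simp: inj_on_def)
  ultimately have "card B * card C = card {(y,z). y \<in> B \<and> z \<in> C \<and> y \<noteq> z} + card (B \<inter> C)"
    by (simp add: card_cartesian_product)
  hence "int (card B * card C) = int (card {(y,z). y \<in> B \<and> z \<in> C \<and> y \<noteq> z}) + int (card (B \<inter> C))"
    by simp
  thus ?thesis by simp
qed

lemma triple_card:
  assumes f: "finite A1" "finite A2" "finite A3"
  shows "int (card {(x,y,z). x \<in> A1 \<and> y \<in> A2 \<and> z \<in> A3 \<and> x \<noteq> y \<and> x \<noteq> z \<and> y \<noteq> z}) =
     int (card A1) * int (card A2) * int (card A3) - int (card (A1 \<inter> A2)) * int (card A3)
     - int (card (A1 \<inter> A3)) * int (card A2) - int (card (A2 \<inter> A3)) * int (card A1)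
     + 2 * int (card (A1 \<inter> A2 \<inter> A3))"
proof -
  define P where "P x = {(y,z). y \<in> A2 - {x} \<and> z \<in> A3 - {x} \<and> y \<noteq> z}" for x
  have eq: "{(x,y,z). x \<in> A1 \<and> y \<in> A2 \<and> z \<in> A3 \<and> x \<noteq> y \<and> x \<noteq> z \<and> y \<noteq> z} = Sigma A1 P"
    by (auto simp: P_def)
  have fP: "finite (P x)" for x
    by (rule finite_subset[of _ "A2 \<times> A3"]) (use f in \<open>auto simp: P_def\<close>)
  have cP: "int (card (P x)) = (int (card A2) - of_bool (x \<in> A2)) * (int (card A3) - of_bool (x \<in> A3))
      - (int (card (A2 \<inter> A3)) - of_bool (x \<in> A2 \<inter> A3))" for x
  proof -
    have "int (card (P x)) = int (card (A2 - {x})) * int (card (A3 - {x})) - int (card ((A2 - {x}) \<inter> (A3 - {x})))"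
      unfolding P_def by (rule pair_card) (use f in auto)
    moreover have "(A2 - {x}) \<inter> (A3 - {x}) = (A2 \<inter> A3) - {x}" by auto
    moreover have "int (card (S - {x})) = int (card S) - of_bool (x \<in> S)" if "finite S" for S
    proof (cases "x \<in> S")
      case True
      hence "card S > 0" using that card_gt_0_iff by blast
      thus ?thesis using True that by (simp add: card_Diff_singleton of_nat_diff)
    qed simp
    ultimately show ?thesis using f by simp
  qed
  have "int (card (Sigma A1 P)) = (\<Sum>x\<in>A1. int (card (P x)))"
    using card_SigmaI[of A1 P] f fP by simp
  also have "\<dots> = (\<Sum>x\<in>A1. int (card A2) * int (card A3) - int (card A3) * of_bool (x \<in> A2)
        - int (card A2) * of_bool (x \<in> A3) - int (card (A2 \<inter> A3))
        + 2 * of_bool (x \<in> A2 \<inter> A3))"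
    by (rule sum.cong) (auto simp: cP algebra_simps)
  also have "\<dots> = int (card A1) * int (card A2) * int (card A3) - int (card A3) * (\<Sum>x\<in>A1. of_bool (x \<in> A2))
        - int (card A2) * (\<Sum>x\<in>A1. of_bool (x \<in> A3)) - int (card A1) * int (card (A2 \<inter> A3))
        + 2 * (\<Sum>x\<in>A1. of_bool (x \<in> A2 \<inter> A3))"
    by (simp add: sum_subtractf sum.distrib sum_distrib_left)
  also have "\<dots> = int (card A1) * int (card A2) * int (card A3) - int (card (A1 \<inter> A2)) * int (card A3)
     - int (card (A1 \<inter> A3)) * int (card A2) - int (card (A2 \<inter> A3)) * int (card A1)
     + 2 * int (card (A1 \<inter> A2 \<inter> A3))"
    using f by (simp add: sum_of_bool_eq Int_assoc Int_def algebra_simps)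
  finally show ?thesis unfolding eq .
qed

lemma sum_split_nat: "sum g {0..<x+y} = sum g {0..<x} + sum g {x..<(x+y::nat)}"
  by (simp add: sum.atLeastLessThan_concat)

lemma sum_const_range:
  assumes "\<And>m. x \<le> m \<Longrightarrow> m < x+y \<Longrightarrow> g m = (C::nat)"
  shows "sum g {x..<x+y} = y * C"
proof -
  have "sum g {x..<x+y} = sum (\<lambda>_. C) {x..<x+y}" by (rule sum.cong) (use assms in auto)
  thus ?thesis by simp
qed

lemma count_types:
  "card {m \<in> {..<a+b+c+d+e+f}. Q (bic_nbrs a b c d e m)} =
     a * of_bool (Q {0}) + b * of_bool (Q {1}) + c * of_bool (Q {2}) +
     d * of_bool (Q {1,2}) + e * of_bool (Q {0,2}) + f * of_bool (Q {0,1})"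
proof -
  let ?g = "\<lambda>m. of_bool (Q (bic_nbrs a b c d e m)) :: nat"
  have "card {m \<in> {..<a+b+c+d+e+f}. Q (bic_nbrs a b c d e m)} = sum ?g {0..<a+b+c+d+e+f}"
    by (simp add: sum_of_bool_eq lessThan_atLeast0 Int_def conj_commute)
  also have "\<dots> = sum ?g {0..<a} + sum ?g {a..<a+b} + sum ?g {a+b..<a+b+c} + sum ?g {a+b+c..<a+b+c+d}
      + sum ?g {a+b+c+d..<a+b+c+d+e} + sum ?g {a+b+c+d+e..<a+b+c+d+e+f}"
    by (simp only: sum_split_nat add.assoc[symmetric] add_0)
  also have "\<dots> = a * of_bool (Q {0}) + b * of_bool (Q {1}) + c * of_bool (Q {2}) +
     d * of_bool (Q {1,2}) + e * of_bool (Q {0,2}) + f * of_bool (Q {0,1})"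
  proof -
    have 1: "sum ?g {0..<0+a} = a * of_bool (Q {0})" by (rule sum_const_range) (simp add: bic_nbrs_def)
    have 2: "sum ?g {a..<a+b} = b * of_bool (Q {1})" by (rule sum_const_range) (simp add: bic_nbrs_def)
    have 3: "sum ?g {a+b..<a+b+c} = c * of_bool (Q {2})" by (rule sum_const_range) (simp add: bic_nbrs_def)
    have 4: "sum ?g {a+b+c..<a+b+c+d} = d * of_bool (Q {1,2})" by (rule sum_const_range) (simp add: bic_nbrs_def)
    have 5: "sum ?g {a+b+c+d..<a+b+c+d+e} = e * of_bool (Q {0,2})" by (rule sum_const_range) (simp add: bic_nbrs_def)
    have 6: "sum ?g {a+b+c+d+e..<a+b+c+d+e+f} = f * of_bool (Q {0,1})" by (rule sum_const_range) (simp add: bic_nbrs_def)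
    show ?thesis using 1 2 3 4 5 6 by simp
  qed
  finally show ?thesis .
qed

lemma less3: "(i::nat) < 3 \<longleftrightarrow> i = 0 \<or> i = 1 \<or> i = 2" by auto

lemma bij_main:
  fixes a b c d e f n :: nat
  defines "k \<equiv> a+b+c+d+e+f"
  defines "N \<equiv> \<lambda>i. {m \<in> {..<k}. i \<in> bic_nbrs a b c d e m}"
  defines "H \<equiv> {h \<in> {..<k} \<rightarrow>\<^sub>E {0..<n}. inj_on h {..<k}}"
  defines "T \<equiv> \<lambda>h. {(x,y,z). x \<in> {0..<n} - h ` N 0 \<and> y \<in> {0..<n} - h ` N 1 \<and> z \<in> {0..<n} - h ` N 2
                  \<and> x \<noteq> y \<and> x \<noteq> z \<and> y \<noteq> z}"
  defines "S \<equiv> {col \<in> bic_verts a b c d e f \<rightarrow>\<^sub>E {0..<n}. \<forall>i\<in>bic_verts a b c d e f. \<forall>j\<in>bic_verts a b c d e f.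
                  bic_adj a b c d e f i j \<longrightarrow> col i \<noteq> col j}"
  shows "bij_betw (\<lambda>col. (\<lambda>m\<in>{..<k}. col (m+3), (col 0, col 1, col 2))) S (Sigma H T)"
proof (rule bij_betw_byWitness[where f' = "\<lambda>(h,(x,y,z)). (\<lambda>i\<in>{0..<k+3}. if i = 0 then x else if i = 1 then y else if i = 2 then z else h (i-3))"])
  have V: "bic_verts a b c d e f = {0..<k+3}" by (simp add: bic_verts_def k_def)
  show "\<forall>col\<in>S. (\<lambda>(h,(x,y,z)). (\<lambda>i\<in>{0..<k+3}. if i = 0 then x else if i = 1 then y else if i = 2 then z else h (i-3)))
          (\<lambda>m\<in>{..<k}. col (m+3), (col 0, col 1, col 2)) = col"
  proof
    fix col assume "col \<in> S"
    hence cext: "col \<in> {0..<k+3} \<rightarrow>\<^sub>E {0..<n}" by (simp add: S_def V)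
    show "(\<lambda>(h,(x,y,z)). (\<lambda>i\<in>{0..<k+3}. if i = 0 then x else if i = 1 then y else if i = 2 then z else h (i-3)))
          (\<lambda>m\<in>{..<k}. col (m+3), (col 0, col 1, col 2)) = col"
    proof (rule HOL.ext)
      fix i show "(\<lambda>(h,(x,y,z)). (\<lambda>i\<in>{0..<k+3}. if i = 0 then x else if i = 1 then y else if i = 2 then z else h (i-3)))
          (\<lambda>m\<in>{..<k}. col (m+3), (col 0, col 1, col 2)) i = col i"
        using cext by (cases "i < k+3") (auto simp: PiE_def extensional_def)
    qed
  qed
  show "\<forall>p\<in>Sigma H T. (\<lambda>col. (\<lambda>m\<in>{..<k}. col (m+3), (col 0, col 1, col 2)))
          ((\<lambda>(h,(x,y,z)). (\<lambda>i\<in>{0..<k+3}. if i = 0 then x else if i = 1 then y else if i = 2 then z else h (i-3))) p) = p"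
  proof
    fix p assume p: "p \<in> Sigma H T"
    obtain h x y z where pe: "p = (h,(x,y,z))" by (cases p) auto
    have "h \<in> {..<k} \<rightarrow>\<^sub>E {0..<n}" using p pe by (simp add: H_def)
    hence "(\<lambda>m\<in>{..<k}. h m) = h" by (auto simp: PiE_def extensional_def)
    moreover have "(\<lambda>m\<in>{..<k}. (\<lambda>i\<in>{0..<k+3}. if i = 0 then x else if i = 1 then y else if i = 2 then z else h (i-3)) (m+3))
        = (\<lambda>m\<in>{..<k}. h m)" by (rule restrict_ext) simp
    ultimately show "(\<lambda>col. (\<lambda>m\<in>{..<k}. col (m+3), (col 0, col 1, col 2)))
          ((\<lambda>(h,(x,y,z)). (\<lambda>i\<in>{0..<k+3}. if i = 0 then x else if i = 1 then y else if i = 2 then z else h (i-3))) p) = p"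
      using pe by simp
  qed
  show "(\<lambda>col. (\<lambda>m\<in>{..<k}. col (m+3), (col 0, col 1, col 2))) ` S \<subseteq> Sigma H T"
  proof
    fix q assume "q \<in> (\<lambda>col. (\<lambda>m\<in>{..<k}. col (m+3), (col 0, col 1, col 2))) ` S"
    then obtain col where col: "col \<in> S" and q: "q = (\<lambda>m\<in>{..<k}. col (m+3), (col 0, col 1, col 2))" by blast
    have cf: "col \<in> {0..<k+3} \<rightarrow>\<^sub>E {0..<n}" using col by (simp add: S_def V)
    have pr: "\<And>i j. i < k+3 \<Longrightarrow> j < k+3 \<Longrightarrow> bic_adj a b c d e f i j \<Longrightarrow> col i \<noteq> col j"
      using col by (auto simp: S_def V)
    have "(\<lambda>m\<in>{..<k}. col (m+3)) \<in> H"
    proof -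
      have "(\<lambda>m\<in>{..<k}. col (m+3)) \<in> {..<k} \<rightarrow>\<^sub>E {0..<n}" using cf by auto
      moreover have "inj_on (\<lambda>m\<in>{..<k}. col (m+3)) {..<k}"
      proof (rule inj_onI)
        fix m1 m2 assume "m1 \<in> {..<k}" "m2 \<in> {..<k}" "(\<lambda>m\<in>{..<k}. col (m+3)) m1 = (\<lambda>m\<in>{..<k}. col (m+3)) m2"
        thus "m1 = m2" using pr[of "m1+3" "m2+3"] by (auto simp: bic_adj_def)
      qed
      ultimately show ?thesis by (simp add: H_def)
    qed
    moreover have "(col 0, col 1, col 2) \<in> T (\<lambda>m\<in>{..<k}. col (m+3))"
    proof -
      have c012: "col 0 \<in> {0..<n}" "col 1 \<in> {0..<n}" "col 2 \<in> {0..<n}" using cf by auto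
      have d: "col 0 \<noteq> col 1" "col 0 \<noteq> col 2" "col 1 \<noteq> col 2"
        using pr[of 0 1] pr[of 0 2] pr[of 1 2] by (auto simp: bic_adj_def)
      have nn: "col i \<notin> (\<lambda>m\<in>{..<k}. col (m+3)) ` N i" if "i < 3" for i
      proof
        assume "col i \<in> (\<lambda>m\<in>{..<k}. col (m+3)) ` N i"
        then obtain m where m: "m \<in> N i" "col i = col (m+3)" by (auto simp: N_def)
        have "bic_adj a b c d e f i (m+3)" using m that by (auto simp: bic_adj_def N_def)
        thus False using pr[of i "m+3"] m that by (auto simp: N_def)
      qed
      show ?thesis using c012 d nn[of 0] nn[of 1] nn[of 2] by (simp add: T_def)
    qed
    ultimately show "q \<in> Sigma H T" using q by simp
  qed
  show "(\<lambda>(h,(x,y,z)). (\<lambda>i\<in>{0..<k+3}. if i = 0 then x else if i = 1 then y else if i = 2 then z else h (i-3))) ` Sigma H T \<subseteq> S"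
  proof
    fix col assume "col \<in> (\<lambda>(h,(x,y,z)). (\<lambda>i\<in>{0..<k+3}. if i = 0 then x else if i = 1 then y else if i = 2 then z else h (i-3))) ` Sigma H T"
    then obtain h x y z where hH: "h \<in> H" and xyz: "(x,y,z) \<in> T h"
      and col: "col = (\<lambda>i\<in>{0..<k+3}. if i = 0 then x else if i = 1 then y else if i = 2 then z else h (i-3))" by auto
    have hf: "h \<in> {..<k} \<rightarrow>\<^sub>E {0..<n}" and hi: "inj_on h {..<k}" using hH by (auto simp: H_def)
    have xs: "x \<in> {0..<n}" "y \<in> {0..<n}" "z \<in> {0..<n}" "x \<noteq> y" "x \<noteq> z" "y \<noteq> z"
      and xn: "x \<notin> h ` N 0" "y \<notin> h ` N 1" "z \<notin> h ` N 2" using xyz by (auto simp: T_def)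
    have "col \<in> {0..<k+3} \<rightarrow>\<^sub>E {0..<n}"
    proof -
      have "\<forall>i\<in>{0..<k+3}. (if i = 0 then x else if i = 1 then y else if i = 2 then z else h (i-3)) \<in> {0..<n}"
      proof
        fix i assume i: "i \<in> {0..<k+3}"
        show "(if i = 0 then x else if i = 1 then y else if i = 2 then z else h (i-3)) \<in> {0..<n}"
        proof (cases "i < 3")
          case True thus ?thesis using xs by (auto simp: less3)
        next
          case False hence "i - 3 \<in> {..<k}" using i by auto
          thus ?thesis using PiE_mem[OF hf, of "i-3"] False by auto
        qed
      qed
      thus ?thesis unfolding col by (simp add: restrict_PiE_iff)
    qed
    moreover have "col i \<noteq> col j" if ij: "i < k+3" "j < k+3" "bic_adj a b c d e f i j" for i j
    proof -
      have neq: "i \<noteq> j" using ij by (simp add: bic_adj_def)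
      have key: "col i \<noteq> col (m+3)" if "i < 3" "m < k" "i \<in> bic_nbrs a b c d e m" for i m
      proof -
        have mN: "m \<in> N i" using that by (simp add: N_def)
        have "col (m+3) = h m" using that by (simp add: col)
        moreover have "col i = (if i = 0 then x else if i = 1 then y else z)" using that by (auto simp: col)
        ultimately show ?thesis using xn mN that by (auto simp: less3)
      qed
      consider "i < 3" "j < 3" | "3 \<le> i" "3 \<le> j" | "i < 3" "3 \<le> j" "i \<in> bic_nbrs a b c d e (j-3)"
        | "j < 3" "3 \<le> i" "j \<in> bic_nbrs a b c d e (i-3)"
        using ij(3) by (auto simp: bic_adj_def)
      thus ?thesis
      proof cases
        case 1 thus ?thesis using neq xs by (auto simp: col less3)
      next
        case 2
        hence "h (i-3) \<noteq> h (j-3)" using hi neq ij inj_on_eq_iff[OF hi, of "i-3" "j-3"] by auto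
        thus ?thesis using 2 ij by (simp add: col)
      next
        case 3 thus ?thesis using key[of i "j-3"] ij by auto
      next
        case 4
        have "i-3 < k" using ij 4 by linarith
        hence "col j \<noteq> col i" using key[of j "i-3"] 4 by auto
        thus ?thesis by metis
      qed
    qed
    ultimately show "col \<in> S" by (auto simp: S_def V)
  qed
qed

definition gpoly :: "nat \<Rightarrow> nat \<Rightarrow> nat \<Rightarrow> nat \<Rightarrow> nat \<Rightarrow> nat \<Rightarrow> real poly" where
  "gpoly a b c d e f = [:-real(a+e+f),1:]*[:-real(b+d+f),1:]*[:-real(c+d+e),1:]
     - [:-real(a+b+d+e+f),1:]*[:-real(c+d+e),1:] - [:-real(a+c+d+e+f),1:]*[:-real(b+d+f),1:]
     - [:-real(b+c+d+e+f),1:]*[:-real(a+e+f),1:] + 2*[:-real(a+b+c+d+e+f),1:]"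

lemma poly_gpoly: "poly (gpoly a b c d e f) x =
   (x - real(a+e+f))*(x - real(b+d+f))*(x - real(c+d+e))
     - (x - real(a+b+d+e+f))*(x - real(c+d+e)) - (x - real(a+c+d+e+f))*(x - real(b+d+f))
     - (x - real(b+c+d+e+f))*(x - real(a+e+f)) + 2*(x - real(a+b+c+d+e+f))"
  by (simp add: gpoly_def algebra_simps)

lemma poly_falling: "poly (falling_poly k) (real n) = real (\<Prod>i\<in>{0..<k}. n - i)"
proof (cases "k \<le> n")
  case True
  have "poly (falling_poly k) (real n) = (\<Prod>i\<in>{0..<k}. real n - real i)"
    by (simp add: falling_poly_def poly_prod lessThan_atLeast0)
  also have "\<dots> = (\<Prod>i\<in>{0..<k}. real (n - i))" by (rule prod.cong) (use True in auto)
  finally show ?thesis by simp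
next
  case False
  hence nk: "n \<in> {0..<k}" by auto
  have "poly (falling_poly k) (real n) = (\<Prod>i\<in>{0..<k}. real n - real i)"
    by (simp add: falling_poly_def poly_prod lessThan_atLeast0)
  also have "\<dots> = 0" using nk by (intro prod_zero) auto
  moreover have "(\<Prod>i\<in>{0..<k}. n - i) = 0" using nk by (intro prod_zero) auto
  ultimately show ?thesis by simp
qed

lemma count_eq:
  fixes a b c d e f n :: nat
  shows "real (num_colorings (bic_verts a b c d e f) (bic_adj a b c d e f) n) =
     poly (falling_poly (a+b+c+d+e+f)) (real n) * poly (gpoly a b c d e f) (real n)"
proof -
  define k where "k \<equiv> a+b+c+d+e+f"
  define N where "N \<equiv> \<lambda>i. {m \<in> {..<k}. i \<in> bic_nbrs a b c d e m}"
  define H where "H \<equiv> {h \<in> {..<k} \<rightarrow>\<^sub>E {0..<n}. inj_on h {..<k}}"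
  define T where "T \<equiv> \<lambda>h. {(x,y,z). x \<in> {0..<n} - h ` N 0 \<and> y \<in> {0..<n} - h ` N 1 \<and> z \<in> {0..<n} - h ` N 2
                  \<and> x \<noteq> y \<and> x \<noteq> z \<and> y \<noteq> z}"
  define S where "S \<equiv> {col \<in> bic_verts a b c d e f \<rightarrow>\<^sub>E {0..<n}. \<forall>i\<in>bic_verts a b c d e f. \<forall>j\<in>bic_verts a b c d e f.
                  bic_adj a b c d e f i j \<longrightarrow> col i \<noteq> col j}"
  define G where "G = (int n - int(a+e+f))*(int n - int(b+d+f))*(int n - int(c+d+e))
     - (int n - int(a+b+d+e+f))*(int n - int(c+d+e)) - (int n - int(a+c+d+e+f))*(int n - int(b+d+f))
     - (int n - int(b+c+d+e+f))*(int n - int(a+e+f)) + 2*(int n - int(a+b+c+d+e+f))"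
  have bij: "bij_betw (\<lambda>col. (\<lambda>m\<in>{..<k}. col (m+3), (col 0, col 1, col 2))) S (Sigma H T)"
    unfolding k_def N_def H_def T_def S_def by (rule bij_main)
  have numS: "num_colorings (bic_verts a b c d e f) (bic_adj a b c d e f) n = card S"
    by (simp add: num_colorings_def S_def)
  have finH: "finite H" unfolding H_def by (rule finite_subset[of _ "{..<k} \<rightarrow>\<^sub>E {0..<n}"]) (auto intro: finite_PiE)
  have finT: "finite (T h)" for h
    by (rule finite_subset[of _ "{0..<n} \<times> {0..<n} \<times> {0..<n}"]) (auto simp: T_def)
  have cS: "card S = (\<Sum>h\<in>H. card (T h))"
    using bij_betw_same_card[OF bij] card_SigmaI[of H T] finH finT by simp
  have cN0: "card (N 0) = a+e+f" using count_types[where Q="\<lambda>S. 0 \<in> S" and a=a and b=b and c=c and d=d and e=e and f=f] by (simp add: N_def k_def)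
  have cN1: "card (N 1) = b+d+f" using count_types[where Q="\<lambda>S. 1 \<in> S" and a=a and b=b and c=c and d=d and e=e and f=f] by (simp add: N_def k_def)
  have cN2: "card (N 2) = c+d+e" using count_types[where Q="\<lambda>S. 2 \<in> S" and a=a and b=b and c=c and d=d and e=e and f=f] by (simp add: N_def k_def)
  have cN01: "card (N 0 \<union> N 1) = a+b+d+e+f"
  proof -
    have "N 0 \<union> N 1 = {m \<in> {..<k}. (\<lambda>S. 0 \<in> S \<or> 1 \<in> S) (bic_nbrs a b c d e m)}" by (auto simp: N_def)
    thus ?thesis using count_types[where Q="\<lambda>S. 0 \<in> S \<or> 1 \<in> S" and a=a and b=b and c=c and d=d and e=e and f=f] by (simp add: k_def)
  qed
  have cN02: "card (N 0 \<union> N 2) = a+c+d+e+f"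
  proof -
    have "N 0 \<union> N 2 = {m \<in> {..<k}. (\<lambda>S. 0 \<in> S \<or> 2 \<in> S) (bic_nbrs a b c d e m)}" by (auto simp: N_def)
    thus ?thesis using count_types[where Q="\<lambda>S. 0 \<in> S \<or> 2 \<in> S" and a=a and b=b and c=c and d=d and e=e and f=f] by (simp add: k_def)
  qed
  have cN12: "card (N 1 \<union> N 2) = b+c+d+e+f"
  proof -
    have "N 1 \<union> N 2 = {m \<in> {..<k}. (\<lambda>S. 1 \<in> S \<or> 2 \<in> S) (bic_nbrs a b c d e m)}" by (auto simp: N_def)
    thus ?thesis using count_types[where Q="\<lambda>S. 1 \<in> S \<or> 2 \<in> S" and a=a and b=b and c=c and d=d and e=e and f=f] by (simp add: k_def)
  qed
  have N012: "N 0 \<union> N 1 \<union> N 2 = {..<k}" by (auto simp: N_def bic_nbrs_def)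
  have Nsub: "N i \<subseteq> {..<k}" for i by (auto simp: N_def)
  have cardA: "int (card ({0..<n} - h ` M)) = int n - int (card M)" if h: "h \<in> H" and M: "M \<subseteq> {..<k}" for h M
  proof -
    have inj: "inj_on h M" using h M by (auto simp: H_def intro: inj_on_subset)
    have sub: "h ` M \<subseteq> {0..<n}" using h M by (auto simp: H_def)
    have fM: "finite M" using M finite_subset by blast
    have "card (h ` M) \<le> n" using card_mono[OF _ sub] by simp
    moreover have "card ({0..<n} - h ` M) = n - card (h ` M)"
      using card_Diff_subset[OF _ sub] fM by simp
    ultimately show ?thesis using card_image[OF inj] by simp
  qed
  have inter: "({0..<n} - h ` M1) \<inter> ({0..<n} - h ` M2) = {0..<n} - h ` (M1 \<union> M2)" for h :: "nat \<Rightarrow> nat" and M1 M2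
    by auto
  have cT: "int (card (T h)) = G" if hH: "h \<in> H" for h
  proof -
    have "T h = {(x,y,z). x \<in> {0..<n} - h ` N 0 \<and> y \<in> {0..<n} - h ` N 1 \<and> z \<in> {0..<n} - h ` N 2
                  \<and> x \<noteq> y \<and> x \<noteq> z \<and> y \<noteq> z}" by (simp add: T_def)
    hence "int (card (T h)) = int (card ({0..<n} - h ` N 0)) * int (card ({0..<n} - h ` N 1)) * int (card ({0..<n} - h ` N 2))
      - int (card (({0..<n} - h ` N 0) \<inter> ({0..<n} - h ` N 1))) * int (card ({0..<n} - h ` N 2))
      - int (card (({0..<n} - h ` N 0) \<inter> ({0..<n} - h ` N 2))) * int (card ({0..<n} - h ` N 1))
      - int (card (({0..<n} - h ` N 1) \<inter> ({0..<n} - h ` N 2))) * int (card ({0..<n} - h ` N 0))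
      + 2 * int (card (({0..<n} - h ` N 0) \<inter> ({0..<n} - h ` N 1) \<inter> ({0..<n} - h ` N 2)))"
      using triple_card[of "{0..<n} - h ` N 0" "{0..<n} - h ` N 1" "{0..<n} - h ` N 2"] by simp
    also have "\<dots> = G"
      unfolding inter N012 G_def
      using cardA[OF hH Nsub] cardA[OF hH, of "N 0 \<union> N 1"] cardA[OF hH, of "N 0 \<union> N 2"]
        cardA[OF hH, of "N 1 \<union> N 2"] cardA[OF hH, of "{..<k}"] Nsub
        cN0 cN1 cN2 cN01 cN02 cN12
      by (simp add: k_def)
    finally show ?thesis .
  qed
  have "real (card S) = (\<Sum>h\<in>H. real (card (T h)))" by (simp add: cS)
  also have "\<dots> = (\<Sum>h\<in>H. real_of_int G)"
  proof (rule sum.cong)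
    fix h assume "h \<in> H"
    hence "real_of_int (int (card (T h))) = real_of_int G" using cT by simp
    thus "real (card (T h)) = real_of_int G" by simp
  qed simp
  also have "\<dots> = real (card H) * real_of_int G" by simp
  also have "real (card H) = poly (falling_poly k) (real n)"
  proof -
    have "card H = card {0..<n} ^ (card {..<k} - card {..<k}) * prod ((-) (card {0..<n})) {0..<card {..<k}}"
      unfolding H_def by (rule card_inj_on_subset_funcset) auto
    thus ?thesis by (simp add: poly_falling)
  qed
  also have "real_of_int G = poly (gpoly a b c d e f) (real n)"
    by (simp add: G_def poly_gpoly)
  finally show ?thesis by (simp add: numS k_def)
qed

lemma chrom_eq: "chromatic_poly (bic_verts a b c d e f) (bic_adj a b c d e f) =
    falling_poly (a+b+c+d+e+f) * gpoly a b c d e f"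
  unfolding chromatic_poly_def
proof (rule the_equality)
  show "\<forall>n. poly (falling_poly (a+b+c+d+e+f) * gpoly a b c d e f) (real n) =
      real (num_colorings (bic_verts a b c d e f) (bic_adj a b c d e f) n)"
    by (simp add: count_eq)
  fix p assume p: "\<forall>n. poly p (real n) = real (num_colorings (bic_verts a b c d e f) (bic_adj a b c d e f) n)"
  let ?q = "falling_poly (a+b+c+d+e+f) * gpoly a b c d e f"
  show "p = ?q"
  proof (rule ccontr)
    assume "p \<noteq> ?q"
    hence "p - ?q \<noteq> 0" by simp
    hence fin: "finite {x. poly (p - ?q) x = 0}" by (rule poly_roots_finite)
    have "range real \<subseteq> {x. poly (p - ?q) x = 0}" using p by (auto simp: count_eq)
    moreover have "infinite (range real)" by (rule range_inj_infinite) (simp add: inj_on_def)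
    ultimately show False using fin finite_subset by blast
  qed
qed

lemma falling_nz: "falling_poly k \<noteq> 0"
  unfolding falling_poly_def by (subst prod_zero_iff) (auto simp: pCons_eq_0_iff)

lemma if_eq: "interesting_factor a b c d e f = gpoly a b c d e f"
  unfolding interesting_factor_def chrom_eq using falling_nz by simp

theorem mainTheorem7:
  fixes r s t u v :: nat
  assumes "int u + int v = 4 * int t - int r - int s + 3"
  shows "interesting_factor r s t t t u =
           - pcompose (interesting_factor r s t t t v) [:6 * real t + 4, -1:]"
proof -
  have vv: "real v = 4 * real t - real r - real s + 3 - real u"
  proof -
    have "real_of_int (int u + int v) = real_of_int (4 * int t - int r - int s + 3)" using assms by simp
    thus ?thesis by simp
  qed
  show ?thesis unfolding if_eq
  proof (rule poly_eq_poly_eq_iff[THEN iffD1], rule HOL.ext)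
    fix x
    show "poly (gpoly r s t t t u) x = poly (- pcompose (gpoly r s t t t v) [:6 * real t + 4, -1:]) x"
      by (simp add: poly_pcompose poly_gpoly vv algebra_simps)
  qed
qed

end
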